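(* Let $m\geq3$ be an integer and let $k,j$ be integers with $1\leq k\leq j\leq\frac{m+2}{2}$. Define $$K_{m,j,k}=\int_0^\infty\left(\frac{t^{mk-j}}{(1+t^m)^{k-\frac12}}-t^{\frac m2-j}\right)dt\quad\text{if } j\leq\frac{m+1}{2},\qquad K_{m,j,k}=\int_0^\infty\left(\frac{t^{mk-\frac m2-1}}{(1+t^m)^{k-\frac12}}-\frac{1}{t+1}\right)dt\quad\text{if $m$ is even and } j=\frac{m+2}{2}.$$ Then $$K_{m,j,k}=\begin{cases}-\frac2m&\text{if } j=k=1,\\ -\frac{2k-1}{m+2-2j}B\left(k-\frac{j-1}{m},\frac12+\frac{j-1}{m}\right)&\text{if } 1\leq k\leq j\leq\frac{m+1}{2},\ j\neq1,\\ \frac2m\left(\ln2-\frac11-\frac13-\cdots-\frac1{2k-5}-\frac1{2k-3}\right)&\text{if $m$ is even and } 1\leq k\leq j=\frac{m+2}{2},\end{cases}$$ where $B$ is the beta function and the sum $\frac11+\frac13+\cdots+\frac1{2k-3}$ is empty when $k=1$.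
   Context: $B(z,w)=\int_0^1(1-u)^{z-1}u^{w-1}du=\frac{\Gamma(z)\Gamma(w)}{\Gamma(z+w)}$ is the beta function. *)

theory Defs
  imports "HOL-Analysis.Analysis"
begin

end

theory Submission
  imports Defs "HOL-Real_Asymp.Real_Asymp"
begin


lemma beta_alg:
  fixes m a b x :: real
  assumes m: "m > 0" and x: "0 < x" "x < 1"
  shows "((x/(1-x)) powr (1/m)) powr (m*a-1) / (1 + ((x/(1-x)) powr (1/m)) powr m) powr (a+b)
         * ((1/m) * (x/(1-x)) powr (1/m - 1) / (1-x)^2)
       = (1/m) * (x powr (a - 1) * (1 - x) powr (b - 1))"
proof -
  define y where "y = x/(1-x)"
  have y: "y > 0" using x by (simp add: y_def)
  have 1: "(y powr (1/m)) powr (m*a-1) = y powr (a - 1/m)"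
    using m by (simp add: powr_powr field_simps)
  have 2: "(y powr (1/m)) powr m = y" using m y by (simp add: powr_powr)
  have 3: "1 + y = 1/(1-x)" using x by (simp add: y_def field_simps)
  have 4: "(1/(1-x)) powr (a+b) = inverse ((1-x) powr (a+b))"
    using x by (subst powr_divide) (auto simp: powr_minus divide_inverse)
  have 5: "y powr (a - 1/m) * y powr (1/m - 1) = y powr (a - 1)"
    by (simp add: powr_add[symmetric])
  have 6: "y powr (a - 1) = x powr (a-1) / (1-x) powr (a-1)"
    using x unfolding y_def by (subst powr_divide) auto
  have 7: "(1-x)^2 = (1-x) powr 2" using x by (simp add: powr_realpow)
  have 8: "(1-x) powr (a+b) / (1-x) powr (a-1) / (1-x) powr 2 = (1-x) powr (b-1)"
  proof -
    have "(1-x) powr (a+b) / (1-x) powr (a-1) = (1-x) powr ((b-1) + 2)"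
      using x by (simp add: powr_diff[symmetric] add.commute)
    also have "\<dots> = (1-x) powr (b-1) * (1-x) powr 2" by (rule powr_add)
    finally show ?thesis using x by simp
  qed
  have "y powr (a - 1/m) / inverse ((1-x) powr (a+b)) * ((1/m) * y powr (1/m - 1) / (1-x) powr 2)
     = (1/m) * (y powr (a - 1/m) * y powr (1/m - 1)) * ((1-x) powr (a+b) / (1-x) powr 2)"
    by (simp add: powr_minus field_simps)
  also have "\<dots> = (1/m) * x powr (a-1) * ((1-x) powr (a+b) / (1-x) powr (a-1) / (1-x) powr 2)"
    unfolding 5 6 by (simp add: field_simps)
  also have "\<dots> = (1/m) * (x powr (a - 1) * (1 - x) powr (b - 1))" unfolding 8 by simp
  finally show ?thesis unfolding y_def[symmetric] 1 2 3 4 7 .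
qed

lemma beta_inf:
  fixes m a b :: real
  assumes m: "m > 0" and a: "a > 0" and b: "b > 0"
  shows "set_integrable lborel {0<..} (\<lambda>t. t powr (m*a-1) / (1 + t powr m) powr (a+b))"
    and "(LINT t:{0<..}|lborel. t powr (m*a-1) / (1 + t powr m) powr (a+b)) = Beta a b / m"
proof -
  define f where "f = (\<lambda>t::real. t powr (m*a-1) / (1 + t powr m) powr (a+b))"
  define g where "g = (\<lambda>x::real. (x/(1-x)) powr (1/m))"
  define g' where "g' = (\<lambda>x::real. (1/m) * (x/(1-x)) powr (1/m - 1) / (1-x)^2)"
  have fg: "f (g x) * g' x = (1/m) * (x powr (a - 1) * (1 - x) powr (b - 1))" if "0<x" "x<1" for x
    using beta_alg[OF m that] unfolding f_def g_def g'_def by simp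
  have e01: "einterval 0 1 = {0<..<(1::real)}"
    using einterval_eq_Icc[of 0 1] by (simp add: zero_ereal_def one_ereal_def)
  have ib: "set_integrable lborel {0<..<1} (\<lambda>t. t powr (a - 1) * (1 - t) powr (b - 1))"
    by (rule set_integrable_subset[OF integrable_Beta[OF a b]]) auto
  have int_beta: "set_integrable lborel (einterval 0 1) (\<lambda>x. f (g x) * g' x)"
  proof -
    have "set_integrable lborel {0<..<1} (\<lambda>t. (1/m) * (t powr (a - 1) * (1 - t) powr (b - 1)))"
      using ib by (rule set_integrable_mult_right)
    then show ?thesis unfolding e01
      by (rule set_integrable_cong[THEN iffD1, rotated 3]) (auto simp: fg)
  qed
  have deriv: "DERIV g x :> g' x" if "0 < ereal x" "ereal x < 1" for x
  proof -
    from that have x: "0 < x" "x < 1" by (auto simp: zero_ereal_def one_ereal_def)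
    show ?thesis unfolding g_def g'_def using x
      by (auto intro!: derivative_eq_intros simp: field_simps power2_eq_square)
  qed
  have contf: "isCont f (g x)" if "0 < ereal x" "ereal x < 1" for x
  proof -
    from that have x: "0 < x" "x < 1" by (auto simp: zero_ereal_def one_ereal_def)
    have "g x > 0" using x unfolding g_def by simp
    moreover have "1 + (g x) powr m > 0" by (smt (verit) powr_ge_zero)
    ultimately show ?thesis unfolding f_def by (auto intro!: continuous_intros)
  qed
  have contg': "isCont g' x" if "0 < ereal x" "ereal x < 1" for x
  proof -
    from that have x: "0 < x" "x < 1" by (auto simp: zero_ereal_def one_ereal_def)
    show ?thesis unfolding g'_def using x m by (auto intro!: continuous_intros)
  qed
  have fnn: "0 \<le> f (g x)" for x unfolding f_def by simp
  have g'nn: "0 \<le> g' x" if "0 \<le> ereal x" "ereal x \<le> 1" for x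
  proof -
    from that have x: "0 \<le> x" "x \<le> 1" by (auto simp: zero_ereal_def one_ereal_def)
    show ?thesis unfolding g'_def using x m by simp
  qed
  have A: "((ereal \<circ> g \<circ> real_of_ereal) \<longlongrightarrow> 0) (at_right 0)"
  proof -
    have "(g \<longlongrightarrow> 0) (at_right 0)" unfolding g_def
      by (rule tendsto_zero_powrI[where b="1/m"]) (use m in \<open>auto intro!: tendsto_eq_intros eventually_at_rightI[of 0 1]\<close>)
    then have "((ereal \<circ> g) \<longlongrightarrow> ereal 0) (at_right 0)"
      by (simp add: comp_def)
    then show ?thesis unfolding zero_ereal_def
      using ereal_tendsto_simps1(2)[of "ereal \<circ> g" "ereal 0" 0] by simp
  qed
  have B: "((ereal \<circ> g \<circ> real_of_ereal) \<longlongrightarrow> \<infinity>) (at_left 1)"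
  proof -
    have l1: "filterlim (\<lambda>x::real. x/(1-x)) at_top (at_left 1)"
      by real_asymp
    have "filterlim g at_top (at_left 1)" unfolding g_def
      by (rule filterlim_compose[OF real_powr_at_top l1]) (use m in simp)
    then have "((ereal \<circ> g) \<longlongrightarrow> \<infinity>) (at_left 1)"
      by (simp add: ereal_tendsto_simps2)
    then show ?thesis unfolding one_ereal_def
      using ereal_tendsto_simps1(1)[of "ereal \<circ> g" "\<infinity>" 1] by simp
  qed
  note sub = interval_integral_substitution_nonneg[of 0 1 g g' f 0 \<infinity>, OF _ deriv contf contg' fnn g'nn A B]
  have main1: "set_integrable lborel (einterval 0 \<infinity>) f"
    and main2: "(LBINT x=0..\<infinity>. f x) = (LBINT x=0..1. f (g x) * g' x)"
    using sub int_beta by auto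
  have "(LBINT x=0..1. f (g x) * g' x) = (LBINT x=0..1. (1/m) * (x powr (a - 1) * (1 - x) powr (b - 1)))"
    by (rule interval_integral_cong) (auto simp: fg e01)
  also have "\<dots> = (1/m) * (LBINT x=0..1. x powr (a - 1) * (1 - x) powr (b - 1))"
    by simp
  also have "(LBINT x=0..1. x powr (a - 1) * (1 - x) powr (b - 1)) = Beta a b"
  proof -
    have "(LBINT x=ereal 0..ereal 1. x powr (a - 1) * (1 - x) powr (b - 1)) = integral {0..1} (\<lambda>x. x powr (a - 1) * (1 - x) powr (b - 1))"
      by (rule interval_integral_eq_integral) (use integrable_Beta[OF a b] in auto)
    also have "\<dots> = Beta a b" using has_integral_Beta_real[OF a b] by (rule integral_unique)
    finally show ?thesis by (simp add: zero_ereal_def one_ereal_def)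
  qed
  finally have "(LBINT x=0..\<infinity>. f x) = Beta a b / m" using main2 by simp
  then show "(LINT t:{0<..}|lborel. f t) = Beta a b / m"
    by (simp add: interval_lebesgue_integral_0_infty)
  show "set_integrable lborel {0<..} f" using main1
    by (simp add: interval_lebesgue_integral_0_infty(1)[symmetric] interval_lebesgue_integrable_def)
qed

lemma FTC0:
  fixes f F :: "real \<Rightarrow> real"
  assumes D: "\<And>x. x > 0 \<Longrightarrow> DERIV F x :> f x"
    and C: "\<And>x. x > 0 \<Longrightarrow> isCont f x"
    and I: "set_integrable lborel {0<..} f"
    and A: "(F \<longlongrightarrow> A) (at_right 0)" and B: "(F \<longlongrightarrow> B) at_top"
  shows "(LINT x:{0<..}|lborel. f x) = B - A"
proof -
  have "(LBINT x=ereal 0..\<infinity>. f x) = B - A"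
  proof (rule interval_integral_FTC_integrable)
    show "(F has_vector_derivative f x) (at x)" if "ereal 0 < ereal x" for x
      using D[of x] that by (simp add: has_real_derivative_iff_has_vector_derivative)
    show "isCont f x" if "ereal 0 < ereal x" for x using C[of x] that by simp
    show "set_integrable lborel (einterval (ereal 0) \<infinity>) f" using I by (simp add: einterval_eq_Ici)
    show "((F \<circ> real_of_ereal) \<longlongrightarrow> A) (at_right (ereal 0))" using A by (simp add: ereal_tendsto_simps1)
    show "((F \<circ> real_of_ereal) \<longlongrightarrow> B) (at_left \<infinity>)" using B by (simp add: ereal_tendsto_simps1)
  qed auto
  then show ?thesis by (simp add: interval_lebesgue_integral_0_infty zero_ereal_def[symmetric])
qed

lemma FTC0_nonneg:
  fixes f F :: "real \<Rightarrow> real"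
  assumes D: "\<And>x. x > 0 \<Longrightarrow> DERIV F x :> f x"
    and C: "\<And>x. x > 0 \<Longrightarrow> isCont f x"
    and N: "\<And>x. x > 0 \<Longrightarrow> f x \<ge> 0"
    and A: "(F \<longlongrightarrow> A) (at_right 0)" and B: "(F \<longlongrightarrow> B) at_top"
  shows "set_integrable lborel {0<..} f" "(LINT x:{0<..}|lborel. f x) = B - A"
proof -
  note X = interval_integral_FTC_nonneg[of "ereal 0" \<infinity> F f A B]
  have h1: "set_integrable lborel (einterval (ereal 0) \<infinity>) f" "(LBINT x=ereal 0..\<infinity>. f x) = B - A"
    by (rule X; use D C N A B in \<open>auto simp: ereal_tendsto_simps1\<close>)+
  show "set_integrable lborel {0<..} f" using h1(1) by (simp add: einterval_eq_Ici)
  show "(LINT x:{0<..}|lborel. f x) = B - A"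
    using h1(2) by (simp add: interval_lebesgue_integral_0_infty zero_ereal_def[symmetric])
qed

lemma meas0:
  fixes f :: "real \<Rightarrow> real"
  assumes "\<And>x. x > 0 \<Longrightarrow> isCont f x"
  shows "set_borel_measurable lborel {0<..} f"
  unfolding set_borel_measurable_def
  by (auto simp del: real_scaleR_def intro!: borel_measurable_continuous_on_indicator
           simp: continuous_on_eq_continuous_at assms)

lemma to_hk:
  fixes f :: "real \<Rightarrow> real"
  assumes "set_integrable lborel {0<..} f" "(LINT x:{0<..}|lborel. f x) = I"
  shows "(f has_integral I) {0<..}"
  using set_borel_integral_eq_integral[OF assms(1)] assms(2)
  by (metis has_integral_integral)



lemma derivG:
  fixes e c d :: real and m :: nat and t :: real
  assumes t: "t > 0" and m: "m > 0" and d: "d = e + 1 - real m * c"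
  shows "((\<lambda>t. t powr (e+1) / (1 + t^m) powr c - t powr d) has_real_derivative
          d * (t powr e / (1 + t^m) powr c - t powr (d - 1)) + real m * c * (t powr e / (1 + t^m) powr (c + 1))) (at t)"
proof -
  define Y where "Y = 1 + t^m"
  have p: "Y > 0" using t by (simp add: Y_def add_pos_nonneg)
  have d1: "((\<lambda>t. t powr (e+1)) has_real_derivative (e+1) * t powr e) (at t)"
    using has_real_derivative_powr[OF t, of "e+1"] by simp
  have d2: "((\<lambda>t. 1 + t^m) has_real_derivative real m * t^(m-1)) (at t)"
    by (auto intro!: derivative_eq_intros)
  have d3: "((\<lambda>y. y powr (-c)) has_real_derivative (-c) * Y powr (-c-1)) (at (1 + t^m))"
    using has_real_derivative_powr[OF p, of "-c"] by (simp add: Y_def)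
  have d4: "((\<lambda>t. (1 + t^m) powr (-c)) has_real_derivative (-c) * Y powr (-c-1) * (real m * t^(m-1))) (at t)"
    using DERIV_chain2[OF d3 d2] .
  have d5: "((\<lambda>t. t powr d) has_real_derivative d * t powr (d-1)) (at t)"
    using has_real_derivative_powr[OF t, of d] by simp
  have D: "((\<lambda>t. t powr (e+1) * (1 + t^m) powr (-c) - t powr d) has_real_derivative
     ((e+1) * t powr e * (1 + t^m) powr (-c) + ((-c) * Y powr (-c-1) * (real m * t^(m-1))) * t powr (e+1) - d * t powr (d-1))) (at t)"
    by (intro DERIV_diff DERIV_mult d1 d4 d5)
  have fe: "(\<lambda>t::real. t powr (e+1) / (1 + t^m) powr c - t powr d) = (\<lambda>t. t powr (e+1) * (1 + t^m) powr (-c) - t powr d)"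
    by (simp add: powr_minus divide_inverse)
  have A: "Y powr (-c) = Y powr (-c-1) * Y"
  proof -
    have "Y powr (-c-1) * Y = Y powr (-c-1) * Y powr 1" using p by simp
    also have "\<dots> = Y powr (-c-1+1)" by (simp only: powr_add)
    finally show ?thesis by simp
  qed
  have tt: "t powr (e+1) * t^(m-1) = t powr e * t^m"
  proof -
    have "t powr (e+1) * t^(m-1) = t powr e * (t * t^(m-1))" using t by (simp add: powr_add)
    also have "t * t^(m-1) = t^m" using m by (simp add: power_eq_if)
    finally show ?thesis .
  qed
  have B: "Y powr (-c-1) = inverse (Y powr (c+1))" using powr_minus[of Y "c+1"] by (metis minus_add_distrib diff_conv_add_uminus)
  have tm: "t^m = Y - 1" by (simp add: Y_def)
  have "(e+1) * t powr e * Y powr (-c) + ((-c) * Y powr (-c-1) * (real m * t^(m-1))) * t powr (e+1) - d * t powr (d-1)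
       = (e+1) * t powr e * Y powr (-c) - c * real m * Y powr (-c-1) * (t powr (e+1) * t^(m-1)) - d * t powr (d-1)"
    by (simp add: algebra_simps)
  also have "\<dots> = d * (t powr e * Y powr (-c) - t powr (d - 1)) + real m * c * (t powr e * Y powr (-c-1))"
    unfolding tt tm A d by (simp add: algebra_simps)
  also have "\<dots> = d * (t powr e / Y powr c - t powr (d - 1)) + real m * c * (t powr e / Y powr (c + 1))"
    by (simp add: powr_minus divide_inverse B)
  finally show ?thesis using D unfolding fe Y_def by simp
qed


lemma Kfacts:
  fixes t c e d :: real and m k :: nat
  assumes t: "t > 0" and m: "m > 0" and c: "0 \<le> c" "c \<le> real k" and d: "d = e + 1 - real m * c"
  defines "s \<equiv> t^m / (1 + t^m)"
  shows "t powr e / (1+t^m) powr c = t powr (d-1) * s powr c"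
    and "t powr (e+1) / (1+t^m) powr c = t powr d * s powr c"
    and "0 \<le> 1 - s powr c" and "1 - s powr c \<le> real k / (1+t^m)"
proof -
  have Y: "1 + t^m > 0" using t by (simp add: add_pos_nonneg)
  have s0: "0 < s" "s < 1" using t Y by (auto simp: s_def)
  have e1: "t powr e = t powr (d-1) * (t^m) powr c"
  proof -
    have "t powr e = t powr ((d-1) + real m * c)" using d by simp
    also have "\<dots> = t powr (d-1) * (t powr real m) powr c" by (simp add: powr_add powr_powr)
    also have "t powr real m = t^m" using t by (simp add: powr_realpow)
    finally show ?thesis .
  qed
  have sc: "(t^m) powr c / (1+t^m) powr c = s powr c"
    unfolding s_def using t Y by (simp add: powr_divide)
  show 1: "t powr e / (1+t^m) powr c = t powr (d-1) * s powr c"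
    unfolding e1 using sc by (metis times_divide_eq_right)
  show "t powr (e+1) / (1+t^m) powr c = t powr d * s powr c"
  proof -
    have "t powr (e+1) = t * t powr e" using t by (simp add: powr_add)
    moreover have "t powr d = t * t powr (d - 1)" using t powr_add[of t 1 "d-1"] by simp
    ultimately show ?thesis using 1 by (metis times_divide_eq_right mult.assoc)
  qed
  show "0 \<le> 1 - s powr c" using s0 c by (simp add: powr_le1)
  have "s ^ k \<le> s powr c"
  proof -
    have "s powr real k \<le> s powr c" using s0 c by (intro powr_mono') auto
    then show ?thesis using s0 by (simp add: powr_realpow)
  qed
  moreover have "1 - real k * (1 - s) \<le> s ^ k"
    using Bernoulli_inequality[of "-(1-s)" k] s0 by (simp add: algebra_simps)
  moreover have "1 - s = 1 / (1 + t^m)" unfolding s_def using Y by (simp add: field_simps)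
  ultimately show "1 - s powr c \<le> real k / (1+t^m)" by simp
qed



lemma Beta_1_half: "Beta 1 (1/2) = (2::real)"
proof -
  have g: "Gamma (1/2 + 1) = (1/2) * Gamma (1/2::real)" by (rule Gamma_plus1) (auto dest: nonpos_Ints_nonpos)
  have "Gamma (1/2::real) > 0" by (rule Gamma_real_pos) simp
  have p: "Gamma (3/2::real) > 0" by (rule Gamma_real_pos) simp
  have q: "Gamma (1/2::real) = 2 * Gamma (3/2)" using g by simp
  have p': "Gamma (3/2::real) \<noteq> 0" using p by linarith
  show ?thesis using p' by (simp add: Beta_def q)
qed

lemma case1:
  fixes m k j :: nat
  assumes m3: "m \<ge> 3" and k1: "1 \<le> k" and kj: "k \<le> j" and jm: "2 * j \<le> m + 1"
  shows "((\<lambda>t::real. t powr (real (m * k) - real j) / (1 + t ^ m) powr (real k - 1/2)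
                          - t powr (real m / 2 - real j))
              has_integral
              (if j = 1 \<and> k = 1 then - 2 / real m
               else - (2 * real k - 1) / (real m + 2 - 2 * real j)
                      * Beta (real k - (real j - 1) / real m) (1/2 + (real j - 1) / real m)))
            {0<..}"
proof -
  define M where "M = real m"
  define c where "c = real k - 1/2"
  define e where "e = real (m * k) - real j"
  define d where "d = e + 1 - M * c"
  have dM: "d - 1 = real m / 2 - real j" "d = M/2 - real j + 1" unfolding d_def e_def c_def M_def
    by (simp_all add: algebra_simps)
  have m0: "m > 0" and M0: "M > 0" using m3 by (auto simp: M_def)
  have d0: "d > 0" using jm by (simp add: dM M_def)
  have dlt: "d < M" using jm m3 k1 kj by (simp add: dM M_def)
  have c0: "0 \<le> c" "c \<le> real k" using k1 by (auto simp: c_def)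
  define f where "f = (\<lambda>t::real. t powr e / (1 + t ^ m) powr c - t powr (d - 1))"
  define g where "g = (\<lambda>t::real. t powr e / (1 + t ^ m) powr (c + 1))"
  define h where "h = (\<lambda>t::real. t powr (d - 1) / (1 + t ^ m))"
  define G where "G = (\<lambda>t::real. t powr (e+1) / (1 + t ^ m) powr c - t powr d)"
  define a where "a = real k - (real j - 1) / M"
  define b where "b = 1/2 + (real j - 1) / M"
  have a0: "a > 0"
  proof -
    have "real m \<le> real k * real m" using k1 mult_right_mono[of 1 "real k" "real m"] by simp
    then have "real j < 1 + real k * real m" using jm by linarith
    then show ?thesis using M0 by (simp add: a_def M_def field_simps)
  qed
  have b0: "b > 0" using k1 kj M0 by (simp add: b_def M_def field_simps)
  have Y: "1 + t^m > 0" if "t > 0" for t :: real using that by (simp add: add_pos_nonneg)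
  have tM: "t powr M = t^m" if "t > 0" for t :: real using that by (simp add: M_def powr_realpow)
  have geq: "t powr (M*a-1) / (1 + t powr M) powr (a+b) = g t" if "t > 0" for t
  proof -
    have "M*a - 1 = e" using M0 by (simp add: a_def e_def M_def field_simps)
    moreover have "a + b = c + 1" by (simp add: a_def b_def c_def)
    ultimately show ?thesis using tM[OF that] by (simp add: g_def)
  qed
  have gi: "set_integrable lborel {0<..} g"
    using beta_inf(1)[OF M0 a0 b0] by (rule set_integrable_cong[THEN iffD1, rotated 3]) (auto simp: geq)
  have gI: "(LINT t:{0<..}|lborel. g t) = Beta a b / M"
    using beta_inf(2)[OF M0 a0 b0] set_lebesgue_integral_cong[of "{0<..}" lborel
        "\<lambda>t. t powr (M*a-1) / (1 + t powr M) powr (a+b)" g] geq by simp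
  have heq: "t powr (M*(d/M)-1) / (1 + t powr M) powr (d/M + (1 - d/M)) = h t" if "t > 0" for t
    using tM[OF that] Y[OF that] M0 by (simp add: h_def)
  have hi0: "set_integrable lborel {0<..} (\<lambda>t. t powr (M*(d/M)-1) / (1 + t powr M) powr (d/M + (1 - d/M)))"
    using M0 d0 dlt by (intro beta_inf(1)) auto
  have hi: "set_integrable lborel {0<..} h"
    apply (rule set_integrable_cong[THEN iffD1, OF refl refl _ hi0])
    apply (rule heq) by simp
  note KF = Kfacts[OF _ m0 c0 d_def[unfolded M_def]]
  have fbound: "norm (f t) \<le> norm (real k * h t)" if "t > 0" for t
  proof -
    define s where "s = t^m / (1 + t^m)"
    have "f t = t powr (d-1) * (s powr c - 1)" using KF(1)[OF that] by (simp add: f_def s_def algebra_simps)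
    then have "norm (f t) = t powr (d-1) * (1 - s powr c)" using KF(3)[OF that] by (simp add: s_def abs_mult)
    also have "\<dots> \<le> t powr (d-1) * (real k / (1 + t^m))"
      using KF(4)[OF that] by (intro mult_left_mono) (auto simp: s_def)
    also have "\<dots> = norm (real k * h t)" using Y[OF that] by (simp add: h_def)
    finally show ?thesis .
  qed
  have Gbound: "norm (G t) \<le> real k * (t powr d / (1 + t^m))" if "t > 0" for t
  proof -
    define s where "s = t^m / (1 + t^m)"
    have "G t = t powr d * (s powr c - 1)" using KF(2)[OF that] by (simp add: G_def s_def algebra_simps)
    then have "norm (G t) = t powr d * (1 - s powr c)" using KF(3)[OF that] by (simp add: s_def abs_mult)
    also have "\<dots> \<le> t powr d * (real k / (1 + t^m))"
      using KF(4)[OF that] by (intro mult_left_mono) (auto simp: s_def)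
    finally show ?thesis by (simp add: mult.commute)
  qed
  have fc: "isCont f t" if "t > 0" for t
    using that Y[OF that] unfolding f_def by (auto intro!: continuous_intros)
  have gc: "isCont g t" if "t > 0" for t
    using that Y[OF that] unfolding g_def by (auto intro!: continuous_intros)
  have fi: "set_integrable lborel {0<..} f"
  proof (rule set_integrable_bound[OF _ meas0[OF fc]])
    show "set_integrable lborel {0<..} (\<lambda>t. real k * h t)" using hi by (rule set_integrable_mult_right)
    show "AE x\<in>{0<..} in lborel. norm (f x) \<le> norm (real k * h x)" using fbound by (intro AE_I2) auto
  qed auto
  define F' where "F' = (\<lambda>t. d * f t + M * c * g t)"
  have F'i: "set_integrable lborel {0<..} F'" unfolding F'_def
    by (intro set_integral_add(1) set_integrable_mult_right fi gi)
  have GD: "DERIV G t :> F' t" if "t > 0" for t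
    using derivG[OF that m0 d_def[unfolded M_def]] unfolding G_def F'_def f_def g_def M_def .
  have F'c: "isCont F' t" if "t > 0" for t unfolding F'_def using fc[OF that] gc[OF that]
    by (auto intro!: continuous_intros)
  have G0: "(G \<longlongrightarrow> 0) (at_right 0)"
  proof (rule Lim_null_comparison)
    show "\<forall>\<^sub>F x in at_right 0. norm (G x) \<le> real k * x powr d"
    proof (rule eventually_at_rightI[of 0 1])
      fix x :: real assume x: "x \<in> {0<..<1}"
      then have "norm (G x) \<le> real k * (x powr d / (1 + x^m))" using Gbound by auto
      also have "\<dots> \<le> real k * x powr d"
        using x by (intro mult_left_mono) (auto simp: divide_le_eq)
      finally show "norm (G x) \<le> real k * x powr d" .
    qed simp
    have "((\<lambda>x::real. x powr d) \<longlongrightarrow> 0) (at_right 0)"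
      by (rule tendsto_zero_powrI[where b=d]) (auto intro!: tendsto_eq_intros eventually_at_rightI[of 0 1] simp: d0)
    then show "((\<lambda>x. real k * x powr d) \<longlongrightarrow> 0) (at_right 0)"
      by (rule tendsto_mult_right_zero)
  qed
  have GI: "(G \<longlongrightarrow> 0) at_top"
  proof (rule Lim_null_comparison)
    show "\<forall>\<^sub>F x in at_top. norm (G x) \<le> real k * x powr (d - M)"
    proof (rule eventually_at_top_linorderI[of 1])
      fix x :: real assume x: "1 \<le> x"
      then have x0: "x > 0" by simp
      then have "norm (G x) \<le> real k * (x powr d / (1 + x^m))" using Gbound by auto
      also have "\<dots> \<le> real k * (x powr d / x powr M)"
        using x0 tM[OF x0] Y[OF x0] by (intro mult_left_mono divide_left_mono) (auto intro!: mult_pos_pos)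
      also have "\<dots> = real k * x powr (d - M)" by (simp add: powr_diff)
      finally show "norm (G x) \<le> real k * x powr (d - M)" .
    qed
    have "((\<lambda>x::real. x powr (d - M)) \<longlongrightarrow> 0) at_top"
      by (rule tendsto_neg_powr) (use dlt in \<open>auto intro: filterlim_ident\<close>)
    then show "((\<lambda>x. real k * x powr (d - M)) \<longlongrightarrow> 0) at_top"
      by (rule tendsto_mult_right_zero)
  qed
  have "(LINT t:{0<..}|lborel. F' t) = 0 - 0"
    by (rule FTC0[OF GD F'c F'i G0 GI])
  moreover have "(LINT t:{0<..}|lborel. F' t) = d * (LINT t:{0<..}|lborel. f t) + M * c * (LINT t:{0<..}|lborel. g t)"
    unfolding F'_def
    by (subst set_integral_add(2)) (auto intro!: set_integrable_mult_right fi gi simp: set_integral_mult_right)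
  ultimately have "(LINT t:{0<..}|lborel. f t) = - c * Beta a b / d"
    using gI d0 M0 by (simp add: field_simps)
  also have "\<dots> = (if j = 1 \<and> k = 1 then - 2 / real m
               else - (2 * real k - 1) / (real m + 2 - 2 * real j)
                      * Beta (real k - (real j - 1) / real m) (1/2 + (real j - 1) / real m))"
  proof (cases "j = 1 \<and> k = 1")
    case True
    then show ?thesis using Beta_1_half by (simp add: a_def b_def c_def dM M_def)
  next
    case False
    have cd: "c = (2 * real k - 1) / 2" "d = (real m + 2 - 2 * real j) / 2"
      by (simp_all add: c_def dM M_def field_simps)
    have "- c * Beta a b / d = - (2 * real k - 1) / (real m + 2 - 2 * real j) * Beta a b"
    proof -
      have pos: "real m + 2 - 2 * real j > 0" using jm by simp
      show ?thesis unfolding cd using pos by (simp add: field_simps)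
    qed
    then show ?thesis unfolding if_not_P[OF False] by (simp add: a_def b_def M_def)
  qed
  finally have LI: "(LINT t:{0<..}|lborel. f t) = (if j = 1 \<and> k = 1 then - 2 / real m
               else - (2 * real k - 1) / (real m + 2 - 2 * real j)
                      * Beta (real k - (real j - 1) / real m) (1/2 + (real j - 1) / real m))" .
  have "(f has_integral (if j = 1 \<and> k = 1 then - 2 / real m
               else - (2 * real k - 1) / (real m + 2 - 2 * real j)
                      * Beta (real k - (real j - 1) / real m) (1/2 + (real j - 1) / real m))) {0<..}"
    by (rule to_hk[OF fi LI])
  moreover have "f = (\<lambda>t::real. t powr (real (m * k) - real j) / (1 + t ^ m) powr (real k - 1/2)
                          - t powr (real m / 2 - real j))"
    unfolding f_def e_def c_def dM(1) ..
  ultimately show ?thesis by simp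
qed



lemma base_P:
  fixes n :: nat assumes n: "n \<ge> 1"
  defines "P \<equiv> (\<lambda>t::real. t^(n-1) * (1 / sqrt ((t^n)^2 + 1) - 1 / (1 + t^n)))"
  shows "set_integrable lborel {0<..} P" "(LINT t:{0<..}|lborel. P t) = ln 2 / n"
proof -
  define \<Phi> where "\<Phi> = (\<lambda>t::real. (arsinh (t^n) - ln (1 + t^n)) / n)"
  have D: "DERIV \<Phi> t :> P t" if t: "t > 0" for t
  proof -
    have p: "1 + t^n > 0" using t by (simp add: add_pos_nonneg)
    have "DERIV \<Phi> t :> (1 / sqrt ((t^n)^2 + 1) * (real n * t^(n-1)) - (real n * t^(n-1)) / (1 + t^n)) / n"
    proof -
      have a1: "((\<lambda>z. arsinh (z^n)) has_real_derivative 1 / sqrt ((t^n)^2 + 1) * (real n * t^(n-1))) (at t)"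
        by (rule DERIV_chain2[OF arsinh_real_has_field_derivative]) (auto intro!: derivative_eq_intros)
      have a2: "((\<lambda>z. ln (1 + z^n)) has_real_derivative (real n * t^(n-1)) / (1 + t^n)) (at t)"
        using p by (auto intro!: derivative_eq_intros simp: field_simps)
      show ?thesis unfolding \<Phi>_def by (intro DERIV_cdivide DERIV_diff a1 a2)
    qed
    moreover have "(1 / sqrt ((t^n)^2 + 1) * (real n * t^(n-1)) - (real n * t^(n-1)) / (1 + t^n)) / n = P t"
      unfolding P_def using n by (simp add: field_simps)
    ultimately show ?thesis by simp
  qed
  have C: "isCont P t" if t: "t > 0" for t
  proof -
    have p: "1 + t^n > 0" using t by (simp add: add_pos_nonneg)
    have "sqrt ((t^n)^2 + 1) > 0" by (intro real_sqrt_gt_zero add_nonneg_pos) auto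
    then show ?thesis unfolding P_def using p by (auto intro!: continuous_intros)
  qed
  have N: "P t \<ge> 0" if t: "t > 0" for t
  proof -
    have p: "1 + t^n > 0" using t by (simp add: add_pos_nonneg)
    have "sqrt ((t^n)^2 + 1) \<le> 1 + t^n"
      by (rule real_sqrt_le_iff'[THEN iffD2]) (use t in \<open>auto simp: power2_eq_square algebra_simps\<close>)
    moreover have "sqrt ((t^n)^2 + 1) > 0" by (intro real_sqrt_gt_zero add_nonneg_pos) auto
    ultimately have "1 / (1 + t^n) \<le> 1 / sqrt ((t^n)^2 + 1)"
      using p by (intro divide_left_mono mult_pos_pos) auto
    then show ?thesis unfolding P_def using t by simp
  qed
  have A: "(\<Phi> \<longlongrightarrow> 0) (at_right 0)"
  proof -
    have "(\<Phi> \<longlongrightarrow> \<Phi> 0) (at_right 0)" unfolding \<Phi>_def using n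
      by (intro tendsto_intros) (auto intro!: tendsto_eq_intros continuous_on_arsinh simp: power_0_left)
    then show ?thesis using n by (simp add: \<Phi>_def power_0_left)
  qed
  have B: "(\<Phi> \<longlongrightarrow> ln 2 / n) at_top"
  proof -
    have l: "((\<lambda>u::real. arsinh u - ln (1 + u)) \<longlongrightarrow> ln 2) at_top"
      unfolding arsinh_real_def by real_asymp
    have "filterlim (\<lambda>t::real. t^n) at_top at_top"
      using n by (intro filterlim_pow_at_top filterlim_ident) auto
    from filterlim_compose[OF l this]
    have "((\<lambda>t::real. arsinh (t^n) - ln (1 + t^n)) \<longlongrightarrow> ln 2) at_top" .
    then show ?thesis unfolding \<Phi>_def using n by (intro tendsto_intros) auto
  qed
  show "set_integrable lborel {0<..} P" using FTC0_nonneg(1)[OF D C N A B] by simp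
  show "(LINT t:{0<..}|lborel. P t) = ln 2 / n" using FTC0_nonneg(2)[OF D C N A B] by simp
qed



lemma base_Q:
  fixes n :: nat assumes n: "n \<ge> 1"
  defines "Q \<equiv> (\<lambda>t::real. 1 / (1 + t) - t^(n-1) / (1 + t^n))"
  shows "set_integrable lborel {0<..} Q" "(LINT t:{0<..}|lborel. Q t) = 0"
proof -
  define W where "W = (\<lambda>t::real. 2 / (1 + t)^2)"
  have WD: "DERIV (\<lambda>t. - 2 / (1 + t)) t :> W t" if "t > 0" for t :: real
    using that unfolding W_def by (auto intro!: derivative_eq_intros simp: power2_eq_square field_simps)
  have WC: "isCont W t" if "t > 0" for t :: real
    using that unfolding W_def by (auto intro!: continuous_intros)
  have WN: "W t \<ge> 0" if "t > 0" for t :: real unfolding W_def by simp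
  have WA: "((\<lambda>t::real. - 2 / (1 + t)) \<longlongrightarrow> -2) (at_right 0)"
    by (auto intro!: tendsto_eq_intros)
  have WB: "((\<lambda>t::real. - 2 / (1 + t)) \<longlongrightarrow> 0) at_top"
    by real_asymp
  have Wi: "set_integrable lborel {0<..} W" by (rule FTC0_nonneg(1)[OF WD WC WN WA WB])
  have Qc: "isCont Q t" if t: "t > 0" for t :: real
  proof -
    have "1 + t^n > 0" using t by (simp add: add_pos_nonneg)
    then show ?thesis using t unfolding Q_def by (auto intro!: continuous_intros)
  qed
  have Qb: "norm (Q t) \<le> norm (W t)" if t: "t > 0" for t :: real
  proof -
    define v where "v = t^(n-1)"
    have tn: "t^n = t * v" unfolding v_def using n by (simp add: power_eq_if)
    have v0: "v \<ge> 0" using t by (simp add: v_def)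
    have tv0: "t * v \<ge> 0" using t v0 by simp
    have key: "\<bar>1 - v\<bar> * (1 + t) \<le> 2 * (1 + t * v)"
    proof (cases "t \<le> 1")
      case True
      then have "v \<le> 1" unfolding v_def using t by (simp add: power_le_one)
      then have "\<bar>1 - v\<bar> * (1 + t) = 1 + t - v - t * v" by (simp add: algebra_simps)
      moreover have "1 + t - v - t * v \<le> 2 * (1 + t * v)" using True t tv0 v0 by (smt (verit))
      ultimately show ?thesis by simp
    next
      case False
      then have v1: "v \<ge> 1" unfolding v_def by (simp add: one_le_power)
      have "v \<le> t * v" using False v0 mult_right_mono[of 1 t v] by simp
      moreover have "\<bar>1 - v\<bar> * (1 + t) = v + t * v - 1 - t" using v1 by (simp add: algebra_simps)
      moreover have "v + t * v - 1 - t \<le> 2 * (1 + t * v)" using v1 False \<open>v \<le> t * v\<close> by (smt (verit))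
      ultimately show ?thesis by simp
    qed
    have Qe: "Q t = (1 - v) / ((1 + t) * (1 + t * v))"
      unfolding Q_def v_def[symmetric] tn using t tv0 by (simp add: field_simps)
    have p1: "1 + t > 0" "1 + t * v > 0" using t tv0 by auto
    have "norm (Q t) = \<bar>1 - v\<bar> / ((1 + t) * (1 + t * v))" using p1 by (simp add: Qe abs_div abs_mult)
    also have "\<dots> \<le> 2 / (1 + t)^2"
      using key p1 by (simp add: divide_simps power2_eq_square)
    also have "\<dots> = norm (W t)" by (simp add: W_def)
    finally show ?thesis .
  qed
  show Qi: "set_integrable lborel {0<..} Q"
    by (rule set_integrable_bound[OF Wi meas0[OF Qc]]) (use Qb in \<open>auto intro!: AE_I2\<close>)
  define R where "R = (\<lambda>t::real. ln (1 + t) - ln (1 + t^n) / n)"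
  have RD: "DERIV R t :> Q t" if t: "t > 0" for t :: real
  proof -
    have p: "1 + t^n > 0" using t by (simp add: add_pos_nonneg)
    have a1: "DERIV (\<lambda>t. ln (1 + t)) t :> 1 / (1 + t)" using t
      by (auto intro!: derivative_eq_intros)
    have a2: "DERIV (\<lambda>t. ln (1 + t^n)) t :> (real n * t^(n-1)) / (1 + t^n)" using p
      by (auto intro!: derivative_eq_intros simp: field_simps)
    have "DERIV R t :> 1 / (1 + t) - (real n * t^(n-1)) / (1 + t^n) / real n"
      unfolding R_def by (intro DERIV_diff a1 DERIV_cdivide a2)
    moreover have "1 / (1 + t) - (real n * t^(n-1)) / (1 + t^n) / real n = Q t"
      unfolding Q_def using n by simp
    ultimately show ?thesis by simp
  qed
  have RA: "(R \<longlongrightarrow> 0) (at_right 0)"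
  proof -
    have "(R \<longlongrightarrow> R 0) (at_right 0)" unfolding R_def using n
      by (auto intro!: tendsto_eq_intros simp: power_0_left)
    then show ?thesis using n by (simp add: R_def power_0_left)
  qed
  have RB: "(R \<longlongrightarrow> 0) at_top"
  proof -
    have i0: "((\<lambda>t::real. inverse t) \<longlongrightarrow> 0) at_top"
      by (intro tendsto_inverse_0_at_top filterlim_ident)
    have l1: "((\<lambda>t::real. (1 + inverse t)^n / (inverse t ^ n + 1)) \<longlongrightarrow> (1 + 0)^n / (0 ^ n + 1)) at_top"
      by (intro tendsto_intros i0) (use n in \<open>simp add: power_0_left\<close>)
    have ev: "\<forall>\<^sub>F t::real in at_top. (1 + inverse t)^n / (inverse t ^ n + 1) = (1 + t)^n / (1 + t^n)"
    proof (rule eventually_at_top_linorderI[of 1])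
      fix t :: real assume "1 \<le> t"
      then have t: "t > 0" by simp
      have tn: "t^n > 0" using t by simp
      have e1: "1 + inverse t = (1 + t) / t" using t by (simp add: field_simps)
      have e2: "(1 + inverse t)^n = (1 + t)^n / t^n" unfolding e1 by (rule power_divide)
      have e3: "inverse t ^ n + 1 = (1 + t^n) / t^n"
        using tn t by (simp add: power_inverse[symmetric] divide_simps)
      have p: "1 + t^n > 0" using tn by simp
      show "(1 + inverse t)^n / (inverse t ^ n + 1) = (1 + t)^n / (1 + t^n)"
        unfolding e2 e3 using tn p t by simp
    qed
    have l2: "((\<lambda>t::real. (1 + t)^n / (1 + t^n)) \<longlongrightarrow> 1) at_top"
      using tendsto_cong[OF ev] l1 using n by (simp add: power_0_left)
    have l3: "((\<lambda>t::real. ln ((1 + t)^n / (1 + t^n)) / n) \<longlongrightarrow> ln 1 / n) at_top"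
      using n by (intro tendsto_intros l2) auto
    have ev2: "\<forall>\<^sub>F t::real in at_top. ln ((1 + t)^n / (1 + t^n)) / n = R t"
    proof (rule eventually_at_top_linorderI[of 1])
      fix t :: real assume "1 \<le> t"
      then have t: "t > 0" by simp
      have p: "1 + t^n > 0" using t by (simp add: add_pos_nonneg)
      show "ln ((1 + t)^n / (1 + t^n)) / n = R t"
        unfolding R_def using t p n by (simp add: ln_div ln_realpow field_simps)
    qed
    show ?thesis using tendsto_cong[OF ev2] l3 by simp
  qed
  show "(LINT t:{0<..}|lborel. Q t) = 0"
    using FTC0[OF RD Qc Qi RA RB] by simp
qed



lemma Beta_x_1:
  fixes x :: real assumes x: "x > 0"
  shows "Beta x 1 = 1 / x"
proof -
  have g: "Gamma (x + 1) = x * Gamma x" by (rule Gamma_plus1) (use x in \<open>auto dest: nonpos_Ints_nonpos\<close>)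
  have "Gamma x > 0" using x by (rule Gamma_real_pos)
  then have "Gamma x \<noteq> 0" by linarith
  then show ?thesis using x by (simp add: Beta_def g)
qed

lemma case2:
  fixes m k :: nat
  assumes m3: "m \<ge> 3" and ev: "even m" and k1: "1 \<le> k"
  shows "((\<lambda>t::real. t powr (real (m * k) - real m / 2 - 1) / (1 + t ^ m) powr (real k - 1/2)
                          - 1 / (t + 1))
              has_integral
              (2 / real m * (ln 2 - (\<Sum>i<k - 1. 1 / (2 * real i + 1)))))
            {0<..}"
proof -
  obtain n where mn: "m = 2 * n" using ev by blast
  have n1: "n \<ge> 1" using m3 mn by simp
  define M where "M = real m"
  have M0: "M > 0" using m3 by (simp add: M_def)
  define \<phi> where "\<phi> = (\<lambda>k::nat. \<lambda>t::real. t powr (real (m * k) - real m / 2 - 1) / (1 + t ^ m) powr (real k - 1/2)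
                          - 1 / (t + 1))"
  define V where "V = (\<lambda>k::nat. 2 / real m * (ln 2 - (\<Sum>i<k - 1. 1 / (2 * real i + 1))))"
  have Y: "1 + t^m > 0" if "t > 0" for t :: real using that by (simp add: add_pos_nonneg)
  have tM: "t powr M = t^m" if "t > 0" for t :: real using that by (simp add: M_def powr_realpow)
  have main: "set_integrable lborel {0<..} (\<phi> (Suc k0)) \<and> (LINT t:{0<..}|lborel. \<phi> (Suc k0) t) = V (Suc k0)" for k0
  proof (induction k0)
    case 0
    define P where "P = (\<lambda>t::real. t^(n-1) * (1 / sqrt ((t^n)^2 + 1) - 1 / (1 + t^n)))"
    define Q where "Q = (\<lambda>t::real. 1 / (1 + t) - t^(n-1) / (1 + t^n))"
    have eq: "\<phi> 1 t = P t - Q t" if t: "t > 0" for t :: real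
    proof -
      have e1: "real (m * 1) - real m / 2 - 1 = real (n - 1)" using mn n1 by (simp add: of_nat_diff)
      have e2: "t powr real (n - 1) = t^(n-1)" using t by (simp add: powr_realpow)
      have e3: "(1 + t^m) powr (real 1 - 1/2) = sqrt ((t^n)^2 + 1)"
        using Y[OF t] by (simp add: powr_half_sqrt mn power_mult[symmetric] mult.commute add.commute)
      show ?thesis unfolding \<phi>_def P_def Q_def e1 e2 e3 by (simp add: field_simps add.commute)
    qed
    have Pi: "set_integrable lborel {0<..} P" and PI: "(LINT t:{0<..}|lborel. P t) = ln 2 / n"
      using base_P[OF n1] unfolding P_def by auto
    have Qi: "set_integrable lborel {0<..} Q" and QI: "(LINT t:{0<..}|lborel. Q t) = 0"
      using base_Q[OF n1] unfolding Q_def by auto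
    have PQi: "set_integrable lborel {0<..} (\<lambda>t. P t - Q t)" by (rule set_integral_diff(1)[OF Pi Qi])
    have i1: "set_integrable lborel {0<..} (\<phi> 1)"
      apply (rule set_integrable_cong[THEN iffD1, OF refl refl _ PQi])
      using eq by simp
    have "(LINT t:{0<..}|lborel. \<phi> 1 t) = (LINT t:{0<..}|lborel. P t - Q t)"
      using eq by (intro set_lebesgue_integral_cong) auto
    also have "\<dots> = ln 2 / n" using set_integral_diff(2)[OF Pi Qi] PI QI by simp
    also have "\<dots> = V 1" using mn n1 by (simp add: V_def)
    finally show ?case using i1 by simp
  next
    case (Suc k0)
    define k where "k = Suc k0"
    have IH: "set_integrable lborel {0<..} (\<phi> k)" "(LINT t:{0<..}|lborel. \<phi> k t) = V k"
      using Suc.IH by (auto simp: k_def)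
    have k1': "real k \<ge> 1" by (simp add: k_def)
    define D where "D = (\<lambda>t::real. t powr (real (m * k) - real m / 2 - 1) / (1 + t^m) powr (real k + 1/2))"
    have Deq: "t powr (M * (real k - 1/2) - 1) / (1 + t powr M) powr ((real k - 1/2) + 1) = D t"
      if t: "t > 0" for t :: real
    proof -
      have "M * (real k - 1/2) - 1 = real (m * k) - real m / 2 - 1" by (simp add: M_def algebra_simps)
      moreover have "(real k - 1/2) + 1 = real k + 1/2" by simp
      ultimately show ?thesis using tM[OF t] by (simp add: D_def add.commute)
    qed
    have a0: "real k - 1/2 > 0" using k1' by simp
    have Di0: "set_integrable lborel {0<..} (\<lambda>t. t powr (M * (real k - 1/2) - 1) / (1 + t powr M) powr ((real k - 1/2) + 1))"
      by (rule beta_inf(1)[OF M0 a0]) simp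
    have Di: "set_integrable lborel {0<..} D"
      apply (rule set_integrable_cong[THEN iffD1, OF refl refl _ Di0])
      apply (rule Deq) by simp
    have DI: "(LINT t:{0<..}|lborel. D t) = 1 / (M * (real k - 1/2))"
    proof -
      have "(LINT t:{0<..}|lborel. D t) = (LINT t:{0<..}|lborel. t powr (M * (real k - 1/2) - 1) / (1 + t powr M) powr ((real k - 1/2) + 1))"
        by (rule set_lebesgue_integral_cong) (auto simp: Deq[symmetric] simp del: add_diff_cancel_right' diff_add_cancel)
      also have "\<dots> = Beta (real k - 1/2) 1 / M" by (rule beta_inf(2)[OF M0 a0]) simp
      also have "\<dots> = 1 / (M * (real k - 1/2))" using a0 by (simp add: Beta_x_1)
      finally show ?thesis .
    qed
    have step: "\<phi> (Suc k) t = \<phi> k t - D t" if t: "t > 0" for t :: real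
    proof -
      define E where "E = real (m * k) - real m / 2 - 1"
      define Yv where "Yv = 1 + t^m"
      have Yp: "Yv > 0" using Y[OF t] by (simp add: Yv_def)
      have x1: "real (m * Suc k) - real m / 2 - 1 = E + M" by (simp add: E_def M_def algebra_simps)
      have x2: "real (Suc k) - 1/2 = real k + 1/2" by simp
      have x3: "t powr (E + M) = t powr E * t^m" using tM[OF t] by (simp add: powr_add)
      have x4: "Yv powr (real k + 1/2) = Yv powr (real k - 1/2) * Yv"
      proof -
        have "Yv powr (real k + 1/2) = Yv powr ((real k - 1/2) + 1)"
          by (rule arg_cong[where f="\<lambda>x. Yv powr x"]) simp
        also have "\<dots> = Yv powr (real k - 1/2) * Yv powr 1" by (rule powr_add)
        finally show ?thesis using Yp by simp
      qed
      have nz: "Yv powr (real k - 1/2) > 0" using Yp by simp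
      have "\<phi> (Suc k) t = t powr E * t^m / Yv powr (real k + 1/2) - 1 / (t + 1)"
        unfolding \<phi>_def x1 x2 x3 Yv_def ..
      also have "\<dots> = t powr E * (Yv - 1) / (Yv powr (real k - 1/2) * Yv) - 1 / (t + 1)"
        unfolding x4 by (simp add: Yv_def)
      also have "\<dots> = (t powr E / Yv powr (real k - 1/2) - 1 / (t + 1)) - t powr E / (Yv powr (real k - 1/2) * Yv)"
        using nz Yp by (simp add: field_simps)
      also have "\<dots> = \<phi> k t - D t"
        unfolding \<phi>_def D_def E_def[symmetric] Yv_def[symmetric] x4 ..
      finally show ?thesis .
    qed
    have di: "set_integrable lborel {0<..} (\<lambda>t. \<phi> k t - D t)" by (rule set_integral_diff(1)[OF IH(1) Di])
    have i1: "set_integrable lborel {0<..} (\<phi> (Suc k))"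
      apply (rule set_integrable_cong[THEN iffD1, OF refl refl _ di])
      using step by simp
    have "(LINT t:{0<..}|lborel. \<phi> (Suc k) t) = (LINT t:{0<..}|lborel. \<phi> k t - D t)"
      by (rule set_lebesgue_integral_cong) (auto simp: step)
    also have "\<dots> = V k - 1 / (M * (real k - 1/2))" using set_integral_diff(2)[OF IH(1) Di] IH(2) DI by simp
    also have "\<dots> = V (Suc k)"
    proof -
      have s: "(\<Sum>i<Suc k - 1. 1 / (2 * real i + 1)) = (\<Sum>i<k - 1. 1 / (2 * real i + 1)) + 1 / (2 * real k - 1)"
        by (simp add: k_def algebra_simps)
      show ?thesis unfolding V_def s using M0 a0 by (simp add: M_def field_simps)
    qed
    finally show ?case using i1 by (simp add: k_def)
  qed
  obtain k0 where "k = Suc k0" using k1 by (cases k) auto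
  then have "(\<phi> k has_integral V k) {0<..}" using main[of k0] to_hk by blast
  then show ?thesis unfolding \<phi>_def V_def .
qed


theorem theoremA2:
  fixes m k j :: nat
  assumes "m \<ge> 3" and "1 \<le> k" and "k \<le> j" and "2 * j \<le> m + 2"
  shows "(2 * j \<le> m + 1 \<longrightarrow>
            ((\<lambda>t::real. t powr (real (m * k) - real j) / (1 + t ^ m) powr (real k - 1/2)
                          - t powr (real m / 2 - real j))
              has_integral
              (if j = 1 \<and> k = 1 then - 2 / real m
               else - (2 * real k - 1) / (real m + 2 - 2 * real j)
                      * Beta (real k - (real j - 1) / real m) (1/2 + (real j - 1) / real m)))
            {0<..})
       \<and> (even m \<and> 2 * j = m + 2 \<longrightarrow>
            ((\<lambda>t::real. t powr (real (m * k) - real m / 2 - 1) / (1 + t ^ m) powr (real k - 1/2)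
                          - 1 / (t + 1))
              has_integral
              (2 / real m * (ln 2 - (\<Sum>i<k - 1. 1 / (2 * real i + 1)))))
            {0<..})"
proof (intro conjI impI)
  assume "2 * j \<le> m + 1"
  then show "((\<lambda>t::real. t powr (real (m * k) - real j) / (1 + t ^ m) powr (real k - 1/2)
                          - t powr (real m / 2 - real j))
              has_integral
              (if j = 1 \<and> k = 1 then - 2 / real m
               else - (2 * real k - 1) / (real m + 2 - 2 * real j)
                      * Beta (real k - (real j - 1) / real m) (1/2 + (real j - 1) / real m)))
            {0<..}" using case1[OF assms(1,2,3)] by blast
next
  assume "even m \<and> 2 * j = m + 2"
  then show "((\<lambda>t::real. t powr (real (m * k) - real m / 2 - 1) / (1 + t ^ m) powr (real k - 1/2)
                          - 1 / (t + 1))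
              has_integral
              (2 / real m * (ln 2 - (\<Sum>i<k - 1. 1 / (2 * real i + 1)))))
            {0<..}" using case2[OF assms(1) _ assms(2)] by blast
qed

end
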